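(* Let $n\ge 3$, let $A=[a_{ij}]$ be a real $n\times n$ matrix with zero diagonal and let $f(\sigma)=\sum_{i=1}^{n-1}\sum_{j=i+1}^n a_{\sigma(i)\sigma(j)}$ be the LOP objective function on $\Sigma_n$. Then $\hat f_{(n-1,1)}=0$ if and only if $\sum_{j=1}^n(a_{ij}-a_{ji})=0$ for all $i=1,\dots,n$.
   Context: $\Sigma_n$ is the symmetric group on $\{1,\dots,n\}$; $\sigma(k)$ is the row/column index placed in position $k$. For a partition $\lambda$ of $n$, $\rho_\lambda$ is the irreducible representation of $\Sigma_n$ indexed by $\lambda$ and $\hat f_\lambda=\sum_{\sigma\in\Sigma_n}f(\sigma)\rho_\lambda(\sigma)$. *)

theory Defs
  imports Complex_Main "HOL-Combinatorics.Permutations"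
begin

definition Sym :: "nat \<Rightarrow> (nat \<Rightarrow> nat) set" where
  "Sym n = {\<sigma>. \<sigma> permutes {1..n}}"

definition lop_obj :: "nat \<Rightarrow> (nat \<Rightarrow> nat \<Rightarrow> real) \<Rightarrow> (nat \<Rightarrow> nat) \<Rightarrow> real" where
  "lop_obj n A \<sigma> = (\<Sum>i=1..n-1. \<Sum>j=i+1..n. A (\<sigma> i) (\<sigma> j))"

text \<open>A concrete realization of the irreducible representation indexed by the partition (n-1,1)
  (the standard representation): the permutation action e_j \<mapsto> e_{sigma j} restricted to the
  sum-zero subspace of R^n, written in the basis b_i = e_i - e_n (i = 1..n-1).
  Entry (i,j), for i,j in {1..n-1}, of the (n-1)x(n-1) matrix rho(sigma).\<close>

definition std_rep :: "nat \<Rightarrow> (nat \<Rightarrow> nat) \<Rightarrow> nat \<Rightarrow> nat \<Rightarrow> real" where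
  "std_rep n \<sigma> i j = (if \<sigma> j = i then 1 else 0) - (if \<sigma> n = i then 1 else 0)"

definition fourier_std :: "nat \<Rightarrow> ((nat \<Rightarrow> nat) \<Rightarrow> real) \<Rightarrow> nat \<Rightarrow> nat \<Rightarrow> real" where
  "fourier_std n f i j = (\<Sum>\<sigma>\<in>Sym n. f \<sigma> * std_rep n \<sigma> i j)"

end

theory Submission
  imports Defs
begin

lemma exists_pi:
  assumes "k \<in> T" "l \<in> T" "a \<in> T" "b \<in> T" "k \<noteq> l" "a \<noteq> b"
  shows "\<exists>\<pi>. \<pi> permutes T \<and> \<pi> k = a \<and> \<pi> l = b"
proof -
  let ?p1 = "transpose a k"
  let ?p = "transpose b (?p1 l) \<circ> ?p1"
  have "?p1 l \<in> T" using assms by (auto simp: transpose_def)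
  hence "?p permutes T" using assms by (intro permutes_compose permutes_swap_id) auto
  moreover have "?p k = a" using assms by (auto simp: transpose_def)
  moreover have "?p l = b" by simp
  ultimately show ?thesis by blast
qed

lemma count2:
  assumes "k \<in> T" "l \<in> T" "a \<in> T" "b \<in> T" "k \<noteq> l" "a \<noteq> b" "finite T"
  shows "card {\<sigma>. \<sigma> permutes T \<and> \<sigma> k = a \<and> \<sigma> l = b} = fact (card T - 2)"
proof -
  obtain \<pi> where pi: "\<pi> permutes T" "\<pi> k = a" "\<pi> l = b" using exists_pi[OF assms(1-6)] by blast
  let ?F = "{\<tau>. \<tau> permutes T - {k,l}}"
  have eq: "{\<sigma>. \<sigma> permutes T \<and> \<sigma> k = a \<and> \<sigma> l = b} = (\<lambda>\<tau>. \<pi> \<circ> \<tau>) ` ?F"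
  proof (intro equalityI subsetI)
    fix \<sigma> assume "\<sigma> \<in> {\<sigma>. \<sigma> permutes T \<and> \<sigma> k = a \<and> \<sigma> l = b}"
    hence s: "\<sigma> permutes T" "\<sigma> k = a" "\<sigma> l = b" by auto
    let ?t = "inv \<pi> \<circ> \<sigma>"
    have tp: "?t permutes T" using s pi by (intro permutes_compose permutes_inv)
    have "?t k = k" "?t l = l" using s pi permutes_inverses(2)[OF pi(1)] by auto metis+
    hence "?t permutes T - {k,l}" using tp
      by (intro permutes_superset[OF tp]) auto
    moreover have "\<pi> \<circ> ?t = \<sigma>" using permutes_inverses(1)[OF pi(1)] by (auto simp: fun_eq_iff)
    ultimately show "\<sigma> \<in> (\<lambda>\<tau>. \<pi> \<circ> \<tau>) ` ?F" by (metis (mono_tags, lifting) image_eqI mem_Collect_eq)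
  next
    fix \<sigma> assume "\<sigma> \<in> (\<lambda>\<tau>. \<pi> \<circ> \<tau>) ` ?F"
    then obtain \<tau> where t: "\<tau> permutes T - {k,l}" "\<sigma> = \<pi> \<circ> \<tau>" by auto
    have "\<tau> permutes T" using t(1) by (rule permutes_subset) auto
    moreover have "\<tau> k = k" "\<tau> l = l" using t(1) by (auto intro: permutes_not_in)
    ultimately show "\<sigma> \<in> {\<sigma>. \<sigma> permutes T \<and> \<sigma> k = a \<and> \<sigma> l = b}"
      using t(2) pi by (auto intro: permutes_compose)
  qed
  have inj: "inj_on (\<lambda>\<tau>. \<pi> \<circ> \<tau>) ?F"
    using permutes_inj[OF pi(1)] by (auto simp: inj_on_def fun_eq_iff inj_def)
  have "card ?F = fact (card (T - {k,l}))"
    using assms by (intro card_permutations) auto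
  moreover have "card (T - {k,l}) = card T - 2" using assms by (simp add: card_Diff_subset)
  ultimately show ?thesis unfolding eq using card_image[OF inj] by simp
qed

lemma pin_sum:
  fixes G :: "nat \<Rightarrow> real"
  assumes "k \<in> {1..n}" "l \<in> {1..n}" "k \<noteq> l" "i \<in> {1..n}" "G i = 0"
  shows "(\<Sum>\<sigma>\<in>Sym n. if \<sigma> k = i then G (\<sigma> l) else 0) = fact (n-2) * (\<Sum>b=1..n. G b)"
proof -
  have fin: "finite (Sym n)" unfolding Sym_def by (rule finite_permutations) simp
  have "(\<Sum>\<sigma>\<in>Sym n. if \<sigma> k = i then G (\<sigma> l) else 0)
      = (\<Sum>\<sigma>\<in>Sym n. \<Sum>b=1..n. if \<sigma> k = i \<and> \<sigma> l = b then G b else 0)"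
  proof (rule sum.cong)
    fix \<sigma> assume "\<sigma> \<in> Sym n"
    hence "\<sigma> l \<in> {1..n}" using assms(2) unfolding Sym_def by (metis mem_Collect_eq permutes_in_image)
    thus "(if \<sigma> k = i then G (\<sigma> l) else 0) = (\<Sum>b=1..n. if \<sigma> k = i \<and> \<sigma> l = b then G b else 0)"
      by (auto simp: sum.delta)
  qed simp
  also have "\<dots> = (\<Sum>b=1..n. \<Sum>\<sigma>\<in>Sym n. if \<sigma> k = i \<and> \<sigma> l = b then G b else 0)"
    by (rule sum.swap)
  also have "\<dots> = (\<Sum>b=1..n. fact (n-2) * G b)"
  proof (rule sum.cong)
    fix b assume b: "b \<in> {1..n}"
    show "(\<Sum>\<sigma>\<in>Sym n. if \<sigma> k = i \<and> \<sigma> l = b then G b else 0) = fact (n-2) * G b"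
    proof (cases "b = i")
      case True
      hence "G b = 0" using assms(5) by simp
      thus ?thesis by (simp only: if_cancel mult_zero_right sum.neutral_const)
    next
      case False
      have "(\<Sum>\<sigma>\<in>Sym n. if \<sigma> k = i \<and> \<sigma> l = b then G b else 0)
          = (\<Sum>\<sigma>\<in>{\<sigma>\<in>Sym n. \<sigma> k = i \<and> \<sigma> l = b}. G b)"
        using fin by (rule sum.inter_filter[symmetric])
      also have "\<dots> = real (card {\<sigma>\<in>Sym n. \<sigma> k = i \<and> \<sigma> l = b}) * G b" by simp
      also have "{\<sigma>\<in>Sym n. \<sigma> k = i \<and> \<sigma> l = b} = {\<sigma>. \<sigma> permutes {1..n} \<and> \<sigma> k = i \<and> \<sigma> l = b}"
        unfolding Sym_def by auto
      also have "card \<dots> = fact (card {1..n} - 2)"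
        using assms b False by (intro count2) auto
      finally show ?thesis by simp
    qed
  qed simp
  finally show ?thesis by (simp add: sum_distrib_left)
qed

lemma lop_pairs:
  "lop_obj n A \<sigma> = (\<Sum>x\<in>{(p,q). 1 \<le> p \<and> p < q \<and> q \<le> n}. A (\<sigma> (fst x)) (\<sigma> (snd x)))"
proof -
  have "{(p,q). 1 \<le> p \<and> p < q \<and> q \<le> n} = Sigma {1..n-1} (\<lambda>i. {i+1..n})" by auto
  thus ?thesis unfolding lop_obj_def by (simp add: sum.Sigma case_prod_beta)
qed

lemma tr_mono: "(p::nat) < q \<Longrightarrow> (p,q) \<noteq> (k, Suc k) \<Longrightarrow> transpose k (Suc k) p < transpose k (Suc k) q"
  unfolding transpose_def by auto
lemma tr_range: "1 \<le> k \<Longrightarrow> k < n \<Longrightarrow> 1 \<le> (p::nat) \<Longrightarrow> p \<le> n \<Longrightarrow> 1 \<le> transpose k (Suc k) p \<and> transpose k (Suc k) p \<le> n"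
  unfolding transpose_def by auto

lemma lop_swap:
  assumes "1 \<le> k" "k < n"
  shows "lop_obj n A (\<sigma> \<circ> transpose k (k+1)) =
         lop_obj n A \<sigma> - A (\<sigma> k) (\<sigma> (k+1)) + A (\<sigma> (k+1)) (\<sigma> k)"
proof -
  let ?t = "transpose k (k+1)"
  let ?P = "{(p,q). 1 \<le> p \<and> p < q \<and> q \<le> n}"
  let ?g = "\<lambda>x. A (\<sigma> (fst x)) (\<sigma> (snd x))"
  have finP: "finite ?P" by (rule finite_subset[of _ "{1..n} \<times> {1..n}"]) auto
  have inj: "inj_on (map_prod ?t ?t) ?P"
    proof -
    have "inj_on (map_prod ?t ?t) (UNIV \<times> UNIV)" by (rule map_prod_inj_on) (simp_all add: inj_transpose)
    thus ?thesis by (rule inj_on_subset) simp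
  qed
  have img: "map_prod ?t ?t ` ?P = insert (k+1,k) (?P - {(k,k+1)})"
  proof (intro equalityI subsetI)
    fix x assume "x \<in> map_prod ?t ?t ` ?P"
    then obtain p q where x: "x = (?t p, ?t q)" and pq: "1 \<le> p" "p < q" "q \<le> n" by auto
    show "x \<in> insert (k+1,k) (?P - {(k,k+1)})"
    proof (cases "(p,q) = (k, Suc k)")
      case True thus ?thesis using x by auto
    next
      case False
      have "?t p < ?t q" using tr_mono[OF pq(2) False] by simp
      moreover have "1 \<le> ?t p" "?t q \<le> n" using tr_range[OF assms(1) assms(2)] pq by auto
      moreover have "x \<noteq> (k, k+1)"
      proof
        assume "x = (k, k+1)"
        hence "?t (?t p) = ?t k" "?t (?t q) = ?t (Suc k)" using x by auto
        hence "p = Suc k" "q = k" by simp_all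
        thus False using pq by simp
      qed
      ultimately show ?thesis using x by auto
    qed
  next
    fix x assume x: "x \<in> insert (k+1,k) (?P - {(k,k+1)})"
    have "x = map_prod ?t ?t (map_prod ?t ?t x)" by (cases x) simp
    moreover have "map_prod ?t ?t x \<in> ?P"
    proof (cases "x = (k+1,k)")
      case True thus ?thesis using assms by simp
    next
      case False
      obtain p q where xe1: "x = (p,q)" by (cases x)
      have xin: "x \<in> ?P" "x \<noteq> (k, k+1)" using x False by blast+
      have xe: "1 \<le> p" "p < q" "q \<le> n" "(p,q) \<noteq> (k, Suc k)" using xin unfolding xe1 by auto
      have "?t p < ?t q" using tr_mono[OF xe(2) xe(4)] by simp
      moreover have "1 \<le> ?t p" "?t q \<le> n" using tr_range[OF assms(1) assms(2)] xe by auto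
      ultimately show ?thesis unfolding xe1 by simp
    qed
    ultimately show "x \<in> map_prod ?t ?t ` ?P" by (rule image_eqI)
  qed
  have "lop_obj n A (\<sigma> \<circ> ?t) = (\<Sum>x\<in>?P. ?g (map_prod ?t ?t x))"
    unfolding lop_pairs by (simp add: case_prod_beta)
  also have "\<dots> = sum ?g (map_prod ?t ?t ` ?P)"
    by (rule sum.reindex[OF inj, symmetric, unfolded comp_def])
  also have "\<dots> = ?g (k+1,k) + sum ?g (?P - {(k,k+1)})"
    unfolding img using finP by (subst sum.insert) auto
  also have "sum ?g (?P - {(k,k+1)}) = sum ?g ?P - ?g (k,k+1)"
    using finP assms by (subst sum_diff1) auto
  finally show ?thesis unfolding lop_pairs by simp
qed

definition hh :: "nat \<Rightarrow> (nat \<Rightarrow> nat \<Rightarrow> real) \<Rightarrow> nat \<Rightarrow> nat \<Rightarrow> real" where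
  "hh n A i k = (\<Sum>\<sigma>\<in>Sym n. lop_obj n A \<sigma> * (if \<sigma> k = i then 1 else 0))"

lemma h_step:
  assumes "1 \<le> k" "k < n" "i \<in> {1..n}"
  shows "hh n A i (Suc k) = hh n A i k + fact (n-2) * (\<Sum>b=1..n. A b i - A i b)"
proof -
  let ?t = "transpose k (Suc k)"
  let ?F = "\<lambda>\<sigma>. lop_obj n A \<sigma> * (if \<sigma> (Suc k) = i then 1 else 0)"
  have tp: "?t permutes {1..n}" using assms by (intro permutes_swap_id) auto
  have "hh n A i (Suc k) = (\<Sum>\<sigma>\<in>Sym n. ?F (\<sigma> \<circ> ?t))"
  proof -
    have tt: "\<sigma> \<circ> ?t \<circ> ?t = \<sigma>" for \<sigma> :: "nat \<Rightarrow> nat" by (simp add: fun_eq_iff)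
    show ?thesis unfolding hh_def
      by (rule sum.reindex_bij_witness[of _ "\<lambda>\<sigma>. \<sigma> \<circ> ?t" "\<lambda>\<sigma>. \<sigma> \<circ> ?t"])
         (use tp in \<open>auto simp: tt Sym_def intro: permutes_compose\<close>)
  qed
  also have "\<dots> = (\<Sum>\<sigma>\<in>Sym n. lop_obj n A \<sigma> * (if \<sigma> k = i then 1 else 0)
                 + (if \<sigma> k = i then A (\<sigma> (Suc k)) i - A i (\<sigma> (Suc k)) else 0))"
  proof (rule sum.cong)
    fix \<sigma> :: "nat \<Rightarrow> nat"
    have "lop_obj n A (\<sigma> \<circ> ?t) = lop_obj n A \<sigma> - A (\<sigma> k) (\<sigma> (k+1)) + A (\<sigma> (k+1)) (\<sigma> k)"
      using lop_swap[OF assms(1,2)] by simp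
    thus "?F (\<sigma> \<circ> ?t) = lop_obj n A \<sigma> * (if \<sigma> k = i then 1 else 0)
                 + (if \<sigma> k = i then A (\<sigma> (Suc k)) i - A i (\<sigma> (Suc k)) else 0)"
      by simp
  qed simp
  also have "\<dots> = hh n A i k + (\<Sum>\<sigma>\<in>Sym n. if \<sigma> k = i then A (\<sigma> (Suc k)) i - A i (\<sigma> (Suc k)) else 0)"
    unfolding hh_def by (rule sum.distrib)
  also have "(\<Sum>\<sigma>\<in>Sym n. if \<sigma> k = i then A (\<sigma> (Suc k)) i - A i (\<sigma> (Suc k)) else 0)
       = fact (n-2) * (\<Sum>b=1..n. A b i - A i b)"
    using pin_sum[of k n "Suc k" i "\<lambda>b. A b i - A i b"] assms by simp
  finally show ?thesis .
qed

lemma h_lin: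
  assumes "1 \<le> k" "k \<le> n" "i \<in> {1..n}"
  shows "hh n A i k = hh n A i 1 + real (k - 1) * (fact (n-2) * (\<Sum>b=1..n. A b i - A i b))"
  using assms(1,2)
proof (induction k rule: dec_induct)
  case base then show ?case by simp
next
  case (step m)
  have "hh n A i (Suc m) = hh n A i m + fact (n-2) * (\<Sum>b=1..n. A b i - A i b)"
    using step assms by (intro h_step) auto
  also have "\<dots> = hh n A i 1 + real (Suc m - 1) * (fact (n-2) * (\<Sum>b=1..n. A b i - A i b))"
    using step by (simp add: algebra_simps of_nat_diff)
  finally show ?case .
qed

lemma fourier_formula:
  assumes "1 \<le> j" "j \<le> n" "i \<in> {1..n}"
  shows "fourier_std n (lop_obj n A) i j
     = (real n - real j) * fact (n-2) * (\<Sum>b=1..n. A i b - A b i)"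
proof -
  have "fourier_std n (lop_obj n A) i j = hh n A i j - hh n A i n"
    unfolding fourier_std_def hh_def std_rep_def
    by (simp add: sum_subtractf right_diff_distrib)
  also have "\<dots> = (real (j-1) - real (n-1)) * (fact (n-2) * (\<Sum>b=1..n. A b i - A i b))"
    using h_lin[OF assms(1,2,3), of A] h_lin[of n n i A] assms by (simp add: algebra_simps)
  also have "(\<Sum>b=1..n. A b i - A i b) = - (\<Sum>b=1..n. A i b - A b i)"
    by (simp add: sum_negf[symmetric])
  finally show ?thesis using assms by (simp add: of_nat_diff algebra_simps)
qed

theorem proposition3:
  fixes n :: nat and A :: "nat \<Rightarrow> nat \<Rightarrow> real"
  assumes "n \<ge> 3"
    and "\<forall>i\<in>{1..n}. A i i = 0"
  shows "(\<forall>i\<in>{1..n-1}. \<forall>j\<in>{1..n-1}. fourier_std n (lop_obj n A) i j = 0) \<longleftrightarrow>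
         (\<forall>i\<in>{1..n}. (\<Sum>j=1..n. A i j - A j i) = 0)"
proof
  assume H: "\<forall>i\<in>{1..n-1}. \<forall>j\<in>{1..n-1}. fourier_std n (lop_obj n A) i j = 0"
  have lt: "(\<Sum>j=1..n. A i j - A j i) = 0" if i: "i \<in> {1..n-1}" for i
  proof -
    have "fourier_std n (lop_obj n A) i 1 = 0" using H i assms(1) by auto
    moreover have "fourier_std n (lop_obj n A) i 1 = (real n - 1) * fact (n-2) * (\<Sum>b=1..n. A i b - A b i)"
      using fourier_formula[of 1 n i A] i assms(1) by auto
    moreover have "real n - 1 \<noteq> 0" using assms(1) by simp
    ultimately show ?thesis by simp
  qed
  have tot: "(\<Sum>i=1..n. \<Sum>j=1..n. A i j - A j i) = 0"
  proof -
    have "(\<Sum>i=1..n. \<Sum>j=1..n. A j i) = (\<Sum>i=1..n. \<Sum>j=1..n. A i j)" by (rule sum.swap)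
    thus ?thesis by (simp add: sum_subtractf)
  qed
  show "\<forall>i\<in>{1..n}. (\<Sum>j=1..n. A i j - A j i) = 0"
  proof
    fix i assume i: "i \<in> {1..n}"
    show "(\<Sum>j=1..n. A i j - A j i) = 0"
    proof (cases "i = n")
      case False thus ?thesis using lt i False by auto
    next
      case True
      have "(\<Sum>i=1..n. \<Sum>j=1..n. A i j - A j i) = (\<Sum>j=1..n. A n j - A j n) + (\<Sum>i\<in>{1..n}-{n}. \<Sum>j=1..n. A i j - A j i)"
        using i True by (intro sum.remove) auto
      moreover have "(\<Sum>i\<in>{1..n}-{n}. \<Sum>j=1..n. A i j - A j i) = 0"
      proof (rule sum.neutral, rule ballI)
        fix x assume "x \<in> {1..n}-{n}"
        hence "x \<in> {1..n-1}" by auto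
        thus "(\<Sum>j=1..n. A x j - A j x) = 0" using lt by blast
      qed
      ultimately show ?thesis using tot True by simp
    qed
  qed
next
  assume H: "\<forall>i\<in>{1..n}. (\<Sum>j=1..n. A i j - A j i) = 0"
  show "\<forall>i\<in>{1..n-1}. \<forall>j\<in>{1..n-1}. fourier_std n (lop_obj n A) i j = 0"
    using fourier_formula H by auto
qed

end
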